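(* Let $\mathfrak{n}$ be the real 3-dimensional Heisenberg Lie algebra with basis $(x_1,x_2,x_3)$ and only nonzero bracket $[x_1,x_2]=x_3$. (i) Any linear map $J:\mathfrak{n}\to\mathfrak{n}$ which has zero torsion and is an extension of a rank 1 CR-structure $(\mathfrak{p},J_\mathfrak{p})$ on $\mathfrak{n}$ with $\mathfrak{p}$ nonabelian is equivalent to a unique endomorphism with matrix (in the basis $(x_1,x_2,x_3)$) $\begin{pmatrix}0&-1&0\\1&0&0\\0&0&c\end{pmatrix}$, $c\in\mathbb{R}$. (ii) Any linear map $J:\mathfrak{n}\to\mathfrak{n}$ which is an extension of a rank 1 CR-structure $(\mathfrak{p},J_\mathfrak{p})$ on $\mathfrak{n}$ with $\mathfrak{p}$ abelian is equivalent to a unique endomorphism with matrix (in the basis $(x_1,x_2,x_3)$) $\begin{pmatrix}t&0&0\\0&0&1\\0&-1&0\end{pmatrix}$, $t\in\mathbb{R}$; and such a $J$ has nonzero torsion.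
   Context: A rank 1 CR-structure on a real Lie algebra $\mathfrak{g}$ is a pair $(\mathfrak{p},J_\mathfrak{p})$ where $\mathfrak{p}$ is a 2-dimensional vector subspace of $\mathfrak{g}$ and $J_\mathfrak{p}:\mathfrak{p}\to\mathfrak{p}$ is linear with (a) $J_\mathfrak{p}^2=-1$, (b) $[X,Y]-[J_\mathfrak{p}X,J_\mathfrak{p}Y]\in\mathfrak{p}$ for all $X,Y\in\mathfrak{p}$, (c) $[J_\mathfrak{p}X,J_\mathfrak{p}Y]-[X,Y]-J_\mathfrak{p}[J_\mathfrak{p}X,Y]-J_\mathfrak{p}[X,J_\mathfrak{p}Y]=0$ for all $X,Y\in\mathfrak{p}$. A linear map $J:\mathfrak{g}\to\mathfrak{g}$ is an extension of it if $J|_\mathfrak{p}=J_\mathfrak{p}$. $\mathfrak{p}$ is abelian if $[X,Y]=0$ for all $X,Y\in\mathfrak{p}$. A linear map $J$ has zero torsion if $[JX,JY]-[X,Y]-J[JX,Y]-J[X,JY]=0$ for all $X,Y\in\mathfrak{g}$. Two linear maps $J,J'$ are equivalent if $J'=\Phi\circ J\circ\Phi^{-1}$ for some Lie algebra automorphism $\Phi$. The matrix of a linear map in a basis $(e_j)$ is $(\xi^i_j)$ with $Je_j=\sum_i\xi^i_je_i$. *)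

theory Defs
  imports "HOL-Analysis.Analysis"
begin

text \<open>The real 3-dimensional Heisenberg Lie algebra, modelled on real^3 with
  standard basis x1 = axis 1 1, x2 = axis 2 1, x3 = axis 3 1 and bracket
  determined by [x1,x2] = x3 (all other brackets of basis vectors zero).\<close>

definition hbr :: "real^3 \<Rightarrow> real^3 \<Rightarrow> real^3" where
  "hbr x y = vector [0, 0, x$1 * y$2 - x$2 * y$1]"

definition heis_aut :: "(real^3 \<Rightarrow> real^3) \<Rightarrow> bool" where
  "heis_aut \<Phi> \<longleftrightarrow> linear \<Phi> \<and> bij \<Phi> \<and> (\<forall>x y. \<Phi> (hbr x y) = hbr (\<Phi> x) (\<Phi> y))"

definition equivalent :: "(real^3 \<Rightarrow> real^3) \<Rightarrow> (real^3 \<Rightarrow> real^3) \<Rightarrow> bool" where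
  "equivalent J J' \<longleftrightarrow> (\<exists>\<Phi>. heis_aut \<Phi> \<and> J' = \<Phi> \<circ> J \<circ> inv \<Phi>)"

text \<open>Rank 1 CR-structure (p, Jp): Jp is a map p -> p (only its values on p matter).\<close>
definition CR1 :: "(real^3) set \<Rightarrow> (real^3 \<Rightarrow> real^3) \<Rightarrow> bool" where
  "CR1 p Jp \<longleftrightarrow> subspace p \<and> dim p = 2
     \<and> (\<forall>X\<in>p. Jp X \<in> p)
     \<and> (\<forall>X\<in>p. \<forall>Y\<in>p. Jp (X + Y) = Jp X + Jp Y)
     \<and> (\<forall>X\<in>p. \<forall>a::real. Jp (a *\<^sub>R X) = a *\<^sub>R Jp X)
     \<and> (\<forall>X\<in>p. Jp (Jp X) = - X)
     \<and> (\<forall>X\<in>p. \<forall>Y\<in>p. hbr X Y - hbr (Jp X) (Jp Y) \<in> p)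
     \<and> (\<forall>X\<in>p. \<forall>Y\<in>p. hbr (Jp X) (Jp Y) - hbr X Y - Jp (hbr (Jp X) Y) - Jp (hbr X (Jp Y)) = 0)"

definition extends_CR :: "(real^3 \<Rightarrow> real^3) \<Rightarrow> (real^3) set \<Rightarrow> (real^3 \<Rightarrow> real^3) \<Rightarrow> bool" where
  "extends_CR J p Jp \<longleftrightarrow> (\<forall>X\<in>p. J X = Jp X)"

definition abelian_sub :: "(real^3) set \<Rightarrow> bool" where
  "abelian_sub p \<longleftrightarrow> (\<forall>X\<in>p. \<forall>Y\<in>p. hbr X Y = 0)"

definition zero_torsion :: "(real^3 \<Rightarrow> real^3) \<Rightarrow> bool" where
  "zero_torsion J \<longleftrightarrow> (\<forall>X Y. hbr (J X) (J Y) - hbr X Y - J (hbr (J X) Y) - J (hbr X (J Y)) = 0)"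

text \<open>Matrices given by rows; the endomorphism is v \<mapsto> M *v v, so
  column j of M is the coordinate vector of J(x_j).\<close>
definition M1 :: "real \<Rightarrow> real^3^3" where
  "M1 c = vector [vector [0, -1, 0], vector [1, 0, 0], vector [0, 0, c]]"

definition M2 :: "real \<Rightarrow> real^3^3" where
  "M2 t = vector [vector [t, 0, 0], vector [0, 0, 1], vector [0, -1, 0]]"

end

theory Submission
  imports Defs
begin

lemma vec3_eq: "(x::real^3) = y \<longleftrightarrow> x$1 = y$1 \<and> x$2 = y$2 \<and> x$3 = y$3"
  by (simp add: vec_eq_iff forall_3)

lemma hbr_nth[simp]: "hbr x y $ 1 = 0" "hbr x y $ 2 = 0" "hbr x y $ 3 = x$1 * y$2 - x$2 * y$1"
  by (simp_all add: hbr_def)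

lemma M1_mult: "M1 c *v v = vector [- v$2, v$1, c * v$3]"
  by (simp add: M1_def matrix_vector_mult_def vec3_eq sum_3)

lemma M2_mult: "M2 t *v v = vector [t * v$1, v$3, - v$2]"
  by (simp add: M2_def matrix_vector_mult_def vec3_eq sum_3)

lemma inv_aut:
  fixes \<Psi> :: "real^3 \<Rightarrow> real^3"
  assumes l: "linear \<Psi>" and i: "inj \<Psi>" and h: "\<And>x y. \<Psi> (hbr x y) = hbr (\<Psi> x) (\<Psi> y)"
  shows "heis_aut (inv \<Psi>)" "bij \<Psi>"
proof -
  have s: "surj \<Psi>" using linear_inj_imp_surj[OF l i] .
  show b: "bij \<Psi>" using i s by (simp add: bij_def)
  have fi: "\<And>x. \<Psi> (inv \<Psi> x) = x" using s by (simp add: surj_f_inv_f)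
  have if': "\<And>x. inv \<Psi> (\<Psi> x) = x" using i by simp
  have eq: "\<And>a b. \<Psi> a = \<Psi> b \<Longrightarrow> a = b" using i by (simp add: inj_eq)
  have "linear (inv \<Psi>)"
  proof (rule linearI)
    fix x y show "inv \<Psi> (x + y) = inv \<Psi> x + inv \<Psi> y"
      by (rule eq) (simp add: fi linear_add[OF l])
  next
    fix c :: real and x show "inv \<Psi> (c *\<^sub>R x) = c *\<^sub>R inv \<Psi> x"
      by (rule eq) (simp add: fi linear_scale[OF l])
  qed
  moreover have "bij (inv \<Psi>)" using b by (rule bij_imp_bij_inv)
  moreover have "\<And>x y. inv \<Psi> (hbr x y) = hbr (inv \<Psi> x) (inv \<Psi> y)"
    by (rule eq) (simp add: fi h)
  ultimately show "heis_aut (inv \<Psi>)" by (simp add: heis_aut_def)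
qed

lemma equiv_intro:
  fixes \<Psi> :: "real^3 \<Rightarrow> real^3"
  assumes l: "linear \<Psi>" and i: "inj \<Psi>" and h: "\<And>x y. \<Psi> (hbr x y) = hbr (\<Psi> x) (\<Psi> y)"
    and c: "\<And>x. J (\<Psi> x) = \<Psi> (M x)"
  shows "equivalent J M"
proof -
  note a = inv_aut[OF l i h]
  have "inv \<Psi> \<circ> J \<circ> inv (inv \<Psi>) = M"
    using i by (simp add: inv_inv_eq[OF a(2)] fun_eq_iff c)
  then show ?thesis using a(1) unfolding equivalent_def by metis
qed

lemma equiv_eigen:
  assumes "equivalent J A" "equivalent J B" "A y = t *\<^sub>R y" "y \<noteq> 0"
  shows "\<exists>z. z \<noteq> 0 \<and> B z = t *\<^sub>R z"
proof -
  obtain \<Phi> where P: "heis_aut \<Phi>" "A = \<Phi> \<circ> J \<circ> inv \<Phi>" using assms(1) equivalent_def by blast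
  obtain \<Phi>' where P': "heis_aut \<Phi>'" "B = \<Phi>' \<circ> J \<circ> inv \<Phi>'" using assms(2) equivalent_def by blast
  have l: "linear \<Phi>" "bij \<Phi>" "linear \<Phi>'" "bij \<Phi>'" using P P' heis_aut_def by auto
  define u where "u = inv \<Phi> y"
  have fu: "\<Phi> u = y" unfolding u_def using l(2) by (simp add: bij_is_surj surj_f_inv_f)
  have "\<Phi> (J u) = \<Phi> (t *\<^sub>R u)"
    using assms(3) P(2) fu linear_scale[OF l(1)] by (simp add: u_def)
  hence Ju: "J u = t *\<^sub>R u" using l(2) bij_is_inj inj_eq by metis
  have u0: "u \<noteq> 0" using fu assms(4) linear_0[OF l(1)] by auto
  have "\<Phi>' u \<noteq> 0" using u0 l(3,4) linear_0[OF l(3)] by (metis bij_is_inj inj_eq)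
  moreover have "B (\<Phi>' u) = t *\<^sub>R \<Phi>' u"
    using P'(2) l(4) Ju linear_scale[OF l(3)] by (simp add: bij_is_inj)
  ultimately show ?thesis by blast
qed

lemma span2_mem:
  fixes u w x :: "real^3"
  assumes "x \<in> span {u, w}" shows "\<exists>a b. x = a *\<^sub>R u + b *\<^sub>R w"
proof -
  from assms obtain k where "x - k *\<^sub>R u \<in> span {w}" by (auto simp: span_insert)
  then obtain c where "x - k *\<^sub>R u = c *\<^sub>R w" by (auto simp: span_singleton)
  hence "x = k *\<^sub>R u + c *\<^sub>R w" by (simp add: algebra_simps)
  thus ?thesis by blast
qed

lemma CR_basis:
  fixes J :: "real^3 \<Rightarrow> real^3"
  assumes lJ: "linear J" and cr: "CR1 p Jp" and ex: "extends_CR J p Jp"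
  shows "\<exists>u. u \<in> p \<and> u \<noteq> 0 \<and> J u \<in> p \<and> J (J u) = - u \<and> p \<subseteq> span {u, J u}"
proof -
  have sp: "subspace p" and d: "dim p = 2" and inp: "\<forall>X\<in>p. Jp X \<in> p" and sq: "\<forall>X\<in>p. Jp (Jp X) = - X"
    using cr by (auto simp: CR1_def)
  have JJ: "\<And>X. X \<in> p \<Longrightarrow> J X \<in> p \<and> J (J X) = - X"
    using ex inp sq by (simp add: extends_CR_def)
  have "\<not> p \<subseteq> {0}" using d dim_eq_0 by (metis zero_neq_numeral)
  then obtain u where u: "u \<in> p" "u \<noteq> 0" by blast
  have Ju: "J u \<in> p" "J (J u) = - u" using JJ[OF u(1)] by auto
  have Ju0: "J u \<noteq> 0"
  proof
    assume "J u = 0" hence "J (J u) = 0" using linear_0[OF lJ] by simp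
    thus False using Ju u by simp
  qed
  have nsp: "u \<notin> span {J u}"
  proof
    assume "u \<in> span {J u}"
    then obtain c where c: "u = c *\<^sub>R J u" by (auto simp: span_singleton)
    hence "J u = c *\<^sub>R J (J u)" using linear_scale[OF lJ] by metis
    hence "J u = - c *\<^sub>R u" using Ju by simp
    hence "u = - (c * c) *\<^sub>R u" using c by simp
    hence "u + (c * c) *\<^sub>R u = 0" by (simp add: eq_neg_iff_add_eq_0)
    hence "(1 + c * c) *\<^sub>R u = 0" by (simp add: scaleR_add_left)
    moreover have "1 + c * c \<noteq> (0::real)" by (smt (verit) zero_le_square)
    ultimately show False using u by simp
  qed
  have ind: "independent {u, J u}"
    using nsp Ju0 by (auto simp add: independent_insert)
  have neq: "u \<noteq> J u" using nsp by (metis span_base singletonI)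
  have "p \<subseteq> span {u, J u}"
    by (rule card_ge_dim_independent) (use u Ju ind neq d in auto)
  thus ?thesis using u Ju by blast
qed

definition e3 :: "real^3" where "e3 = vector [0,0,1]"

lemma e3_nth[simp]: "e3$1 = 0" "e3$2 = 0" "e3$3 = 1" by (simp_all add: e3_def)

lemma hbr_e3: "hbr x y = (x$1*y$2 - x$2*y$1) *\<^sub>R e3"
  by (simp add: vec3_eq)

lemma hbr_e3_left[simp]: "hbr e3 y = 0" "hbr y e3 = 0"
  by (simp_all add: vec3_eq)

lemma inj_lin: fixes \<Psi> :: "real^3 \<Rightarrow> real^3"
  assumes "linear \<Psi>" "\<And>x. \<Psi> x = 0 \<Longrightarrow> x = 0" shows "inj \<Psi>"
proof (rule injI)
  fix x y assume "\<Psi> x = \<Psi> y"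
  hence "\<Psi> (x - y) = 0" using linear_diff[OF assms(1)] by simp
  thus "x = y" using assms(2) by force
qed

lemma two_by_two:
  fixes a b u1 u2 w1 w2 :: real
  assumes "a*u1 + b*w1 = 0" "a*u2 + b*w2 = 0" "u1*w2 - u2*w1 \<noteq> 0"
  shows "a = 0 \<and> b = 0"
proof -
  have "a*(u1*w2 - u2*w1) = w2*(a*u1 + b*w1) - w1*(a*u2 + b*w2)" by (simp add: algebra_simps)
  hence a: "a = 0" using assms by simp
  have "b*(u1*w2 - u2*w1) = u1*(a*u2 + b*w2) - u2*(a*u1 + b*w1)" by (simp add: algebra_simps)
  hence "b = 0" using assms by simp
  thus ?thesis using a by simp
qed

lemma part1_exists:
  fixes J :: "real^3 \<Rightarrow> real^3"
  assumes lJ: "linear J" and zt: "zero_torsion J" and cr: "CR1 p Jp" and ex: "extends_CR J p Jp"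
    and na: "\<not> abelian_sub p"
  shows "\<exists>c. equivalent J (\<lambda>v. M1 c *v v)"
proof -
  obtain u where u: "u \<in> p" "u \<noteq> 0" "J u \<in> p" "J (J u) = - u" "p \<subseteq> span {u, J u}"
    using CR_basis[OF lJ cr ex] by blast
  define w where "w = J u"
  have Jw: "J w = - u" using u w_def by simp
  define k where "k = u$1*w$2 - u$2*w$1"
  have k0: "k \<noteq> 0"
  proof
    assume k: "k = 0"
    from na obtain X Y where XY: "X \<in> p" "Y \<in> p" "hbr X Y \<noteq> 0" by (auto simp: abelian_sub_def)
    obtain a b where X: "X = a *\<^sub>R u + b *\<^sub>R w" using span2_mem XY(1) u(5) w_def by blast
    obtain c d where Y: "Y = c *\<^sub>R u + d *\<^sub>R w" using span2_mem XY(2) u(5) w_def by blast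
    have "hbr X Y $ 3 = (a*d - b*c) * k" by (simp add: X Y k_def algebra_simps)
    hence "hbr X Y = 0" using k by (simp add: vec3_eq)
    thus False using XY by simp
  qed
  define z where "z = J e3"
  have T1: "hbr z w - (z$1*u$2 - z$2*u$1) *\<^sub>R z = 0"
  proof -
    have "hbr (J e3) (J u) - hbr e3 u - J (hbr (J e3) u) - J (hbr e3 (J u)) = 0"
      using zt unfolding zero_torsion_def by blast
    moreover have "J (hbr (J e3) u) = (z$1*u$2 - z$2*u$1) *\<^sub>R z"
      by (simp add: hbr_e3[of "J e3" u] linear_scale[OF lJ] z_def)
    ultimately show ?thesis by (simp add: linear_0[OF lJ] z_def w_def)
  qed
  have T2: "hbr z (- u) - (z$1*w$2 - z$2*w$1) *\<^sub>R z = 0"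
  proof -
    have "hbr (J e3) (J w) - hbr e3 w - J (hbr (J e3) w) - J (hbr e3 (J w)) = 0"
      using zt unfolding zero_torsion_def by blast
    moreover have "J (hbr (J e3) w) = (z$1*w$2 - z$2*w$1) *\<^sub>R z"
      by (simp add: hbr_e3[of "J e3" w] linear_scale[OF lJ] z_def)
    ultimately show ?thesis by (simp add: linear_0[OF lJ] z_def Jw)
  qed
  define o1 where "o1 = z$1*u$2 - z$2*u$1"
  define o2 where "o2 = z$1*w$2 - z$2*w$1"
  have a1: "o1 * z$1 = 0" "o1 * z$2 = 0" using T1 unfolding vec3_eq o1_def by simp_all
  have a2: "o2 * z$1 = 0" "o2 * z$2 = 0" using T2 unfolding vec3_eq o2_def by simp_all
  have "o1 * o1 = u$2 * (o1 * z$1) - u$1 * (o1 * z$2)" by (simp add: o1_def algebra_simps)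
  hence o10: "o1 = 0" using a1 by simp
  have "o2 * o2 = w$2 * (o2 * z$1) - w$1 * (o2 * z$2)" by (simp add: o2_def algebra_simps)
  hence o20: "o2 = 0" using a2 by simp
  have "z$1 * k = u$1 * o2 - w$1 * o1" by (simp add: o1_def o2_def k_def algebra_simps)
  hence z1: "z$1 = 0" using o10 o20 k0 by simp
  have "z$2 * k = u$2 * o2 - w$2 * o1" by (simp add: o1_def o2_def k_def algebra_simps)
  hence z2: "z$2 = 0" using o10 o20 k0 by simp
  define \<gamma> where "\<gamma> = z$3"
  have Je3: "J e3 = \<gamma> *\<^sub>R e3" using z1 z2 by (simp add: vec3_eq z_def[symmetric] \<gamma>_def)
  define \<Psi> where "\<Psi> = (\<lambda>x::real^3. x$1 *\<^sub>R u + x$2 *\<^sub>R w + (x$3 * k) *\<^sub>R e3)"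
  have l: "linear \<Psi>"
    by (rule linearI) (simp_all add: \<Psi>_def algebra_simps)
  have i: "inj \<Psi>"
  proof (rule inj_lin[OF l])
    fix x :: "real^3" assume h: "\<Psi> x = 0"
    have "x$1 * u$1 + x$2 * w$1 = 0" "x$1 * u$2 + x$2 * w$2 = 0" "x$1 * u$3 + x$2 * w$3 + x$3 * k = 0"
      using h unfolding vec3_eq by (simp_all add: \<Psi>_def)
    thus "x = 0" using two_by_two[of "x$1" "u$1" "x$2" "w$1" "u$2" "w$2"] k0 unfolding k_def
      by (simp add: vec3_eq)
  qed
  have h: "\<And>x y. \<Psi> (hbr x y) = hbr (\<Psi> x) (\<Psi> y)"
    by (simp add: vec3_eq \<Psi>_def k_def algebra_simps)
  have c: "\<And>x. J (\<Psi> x) = \<Psi> (M1 \<gamma> *v x)"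
    by (simp add: \<Psi>_def M1_mult linear_add[OF lJ] linear_scale[OF lJ] Je3 Jw w_def[symmetric] algebra_simps)
  show ?thesis using equiv_intro[where M="\<lambda>v. M1 \<gamma> *v v", OF l i h c] by blast
qed

lemma part2:
  fixes J :: "real^3 \<Rightarrow> real^3"
  assumes lJ: "linear J" and cr: "CR1 p Jp" and ex: "extends_CR J p Jp" and ab: "abelian_sub p"
  shows "(\<exists>t. equivalent J (\<lambda>v. M2 t *v v)) \<and> \<not> zero_torsion J"
proof -
  obtain u where u: "u \<in> p" "u \<noteq> 0" "J u \<in> p" "J (J u) = - u"
    using CR_basis[OF lJ cr ex] by blast
  define w where "w = J u"
  have Jw: "J w = - u" using u w_def by simp
  have "hbr u w = 0" using ab u w_def by (simp add: abelian_sub_def)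
  hence om: "u$1*w$2 - u$2*w$1 = 0" by (simp add: vec3_eq)
  have ind: "\<And>a b. a *\<^sub>R u + b *\<^sub>R w = 0 \<Longrightarrow> a = 0 \<and> b = 0"
  proof -
    fix a b :: real assume h: "a *\<^sub>R u + b *\<^sub>R w = 0"
    have "J (a *\<^sub>R u + b *\<^sub>R w) = a *\<^sub>R w - b *\<^sub>R u"
      by (simp add: linear_add[OF lJ] linear_scale[OF lJ] w_def[symmetric] Jw)
    hence h2: "a *\<^sub>R w - b *\<^sub>R u = 0" using h linear_0[OF lJ] by metis
    have "(a*a + b*b) *\<^sub>R u = a *\<^sub>R (a *\<^sub>R u + b *\<^sub>R w) - b *\<^sub>R (a *\<^sub>R w - b *\<^sub>R u)"
      by (simp add: algebra_simps)
    hence "(a*a + b*b) *\<^sub>R u = a *\<^sub>R 0 - b *\<^sub>R 0" by (simp only: h h2)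
    hence "(a*a + b*b) *\<^sub>R u = 0" by simp
    hence "a*a + b*b = 0" using u(2) by simp
    thus "a = 0 \<and> b = 0" using sum_squares_eq_zero_iff by blast
  qed
  obtain e where e: "e \<noteq> 0" "e$1 = 0" "e$2 = 0" and eab: "\<exists>a b. e = a *\<^sub>R u + b *\<^sub>R w"
  proof (cases "(- w$1) *\<^sub>R u + u$1 *\<^sub>R w = 0")
    case False
    moreover have "((- w$1) *\<^sub>R u + u$1 *\<^sub>R w)$1 = 0" "((- w$1) *\<^sub>R u + u$1 *\<^sub>R w)$2 = 0"
      using om by (simp_all add: algebra_simps)
    ultimately show ?thesis using that by blast
  next
    case True
    have z1: "u$1 = 0" "w$1 = 0" using ind[OF True] by simp_all
    show ?thesis
    proof (cases "(- w$2) *\<^sub>R u + u$2 *\<^sub>R w = 0")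
      case False
      moreover have "((- w$2) *\<^sub>R u + u$2 *\<^sub>R w)$1 = 0" "((- w$2) *\<^sub>R u + u$2 *\<^sub>R w)$2 = 0"
        using z1 by (simp_all add: algebra_simps)
      ultimately show ?thesis using that by blast
    next
      case True
      have "u$2 = 0" using ind[OF True] by simp
      moreover have "u = 1 *\<^sub>R u + 0 *\<^sub>R w" by simp
      ultimately show ?thesis using that u(2) z1 by blast
    qed
  qed
  define E where "E = e$3"
  have E0: "E \<noteq> 0" using e unfolding E_def by (auto simp: vec3_eq)
  have eE: "e = E *\<^sub>R e3" using e by (simp add: vec3_eq E_def)
  define f where "f = J e"
  have Jf: "J f = - e"
  proof -
    obtain a b where ab: "e = a *\<^sub>R u + b *\<^sub>R w" using eab by blast
    have "f = a *\<^sub>R w - b *\<^sub>R u"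
      by (simp add: f_def ab linear_add[OF lJ] linear_scale[OF lJ] w_def[symmetric] Jw)
    hence "J f = a *\<^sub>R (- u) - b *\<^sub>R w"
      by (simp add: linear_diff[OF lJ] linear_scale[OF lJ] w_def[symmetric] Jw)
    thus ?thesis using ab by (simp add: algebra_simps)
  qed
  have Je3: "J e3 = (1/E) *\<^sub>R f"
  proof -
    have "e3 = (1/E) *\<^sub>R e" using eE E0 by simp
    thus ?thesis by (metis f_def linear_scale[OF lJ])
  qed
  have fnz: "\<not> (f$1 = 0 \<and> f$2 = 0)"
  proof
    assume h: "f$1 = 0 \<and> f$2 = 0"
    define l where "l = f$3 / E"
    have fl: "f = l *\<^sub>R e" using h e E0 by (simp add: vec3_eq l_def E_def)
    hence "J f = l *\<^sub>R f" using f_def linear_scale[OF lJ] by metis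
    hence "- e = (l*l) *\<^sub>R e" using Jf fl by simp
    hence "- E = (l*l) * E" by (simp add: vec3_eq E_def)
    hence "l*l = -1" using E0 by (metis mult_minus1 mult_right_cancel)
    thus False using zero_le_square[of l] by linarith
  qed
  define N where "N = f$1*f$1 + f$2*f$2"
  have N0: "N > 0" using fnz sum_squares_gt_zero_iff unfolding N_def by blast
  define g where "g = (vector [- f$2, f$1, 0] :: real^3)"
  have hbr_e: "\<And>y. hbr e y = 0" using e by (simp add: vec3_eq)
  have ntor: "\<not> zero_torsion J"
  proof
    assume zt: "zero_torsion J"
    have "hbr (J e) (J g) - hbr e g - J (hbr (J e) g) - J (hbr e (J g)) = 0"
      using zt unfolding zero_torsion_def by blast
    moreover have "hbr (J e) g = N *\<^sub>R e3" by (simp add: vec3_eq g_def N_def f_def[symmetric])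
    ultimately have "hbr f (J g) - (N/E) *\<^sub>R f = 0"
      by (simp add: hbr_e linear_0[OF lJ] linear_scale[OF lJ] Je3 f_def[symmetric])
    hence "(N/E) * f$1 = 0" "(N/E) * f$2 = 0" by (simp_all add: vec3_eq)
    thus False using N0 E0 fnz by simp
  qed
  define y where "y = J g"
  define \<alpha> where "\<alpha> = (f$1 * y$2 - f$2 * y$1) / N"
  define s where "s = y - \<alpha> *\<^sub>R g"
  have "f$1 * s$2 - f$2 * s$1 = (f$1 * y$2 - f$2 * y$1) - \<alpha> * N"
    by (simp add: s_def g_def N_def algebra_simps)
  hence os: "f$1 * s$2 = f$2 * s$1" using N0 by (simp add: \<alpha>_def)
  define \<beta> where "\<beta> = (s$1 * f$1 + s$2 * f$2) / N"
  define \<delta> where "\<delta> = (s$3 - \<beta> * f$3) / E"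
  have "(s$1 * f$1 + s$2 * f$2) * f$1 = s$1 * f$1 * f$1 + (f$1 * s$2) * f$2" by (simp add: algebra_simps)
  also have "\<dots> = s$1 * N" unfolding os by (simp add: N_def algebra_simps)
  finally have "(s$1 * f$1 + s$2 * f$2) * f$1 = s$1 * N" .
  hence s1: "s$1 = \<beta> * f$1" using N0 by (simp add: \<beta>_def field_simps)
  have "(s$1 * f$1 + s$2 * f$2) * f$2 = (f$2 * s$1) * f$1 + s$2 * f$2 * f$2" by (simp add: algebra_simps)
  also have "\<dots> = s$2 * N" unfolding os[symmetric] by (simp add: N_def algebra_simps)
  finally have "(s$1 * f$1 + s$2 * f$2) * f$2 = s$2 * N" .
  hence s2: "s$2 = \<beta> * f$2" using N0 by (simp add: \<beta>_def field_simps)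
  have "s = \<beta> *\<^sub>R f + \<delta> *\<^sub>R e" using s1 s2 e E0 by (simp add: vec3_eq \<delta>_def E_def)
  hence Jg: "J g = \<alpha> *\<^sub>R g + \<beta> *\<^sub>R f + \<delta> *\<^sub>R e" by (simp add: s_def y_def algebra_simps)
  define D where "D = 1 + \<alpha> * \<alpha>"
  have D0: "D > 0" unfolding D_def using zero_le_square[of \<alpha>] by linarith
  define c1 where "c1 = (\<alpha> * \<delta> - \<beta>) / D"
  define c2 where "c2 = (\<delta> + \<alpha> * \<beta>) / D"
  define v where "v = g + c1 *\<^sub>R e + c2 *\<^sub>R f"
  have eq1: "\<beta> + c1 = \<alpha> * c2" using D0 by (simp add: c1_def c2_def D_def field_simps)
  have eq2: "\<delta> - c2 = \<alpha> * c1" using D0 by (simp add: c1_def c2_def D_def field_simps)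
  have "J v = \<alpha> *\<^sub>R g + (\<beta> + c1) *\<^sub>R f + (\<delta> - c2) *\<^sub>R e"
    by (simp add: v_def linear_add[OF lJ] linear_scale[OF lJ] Jg f_def[symmetric] Jf algebra_simps)
  hence Jv: "J v = \<alpha> *\<^sub>R v" by (simp add: eq1 eq2 v_def algebra_simps)
  have ovf: "v$1 * f$2 - v$2 * f$1 = - N"
    using e by (simp add: v_def g_def N_def algebra_simps)
  define \<mu> where "\<mu> = - E / N"
  have mu0: "\<mu> \<noteq> 0" using E0 N0 by (simp add: \<mu>_def)
  have muE: "\<mu> * (v$1 * f$2 - v$2 * f$1) = E" using N0 by (simp add: ovf \<mu>_def)
  define \<Psi> where "\<Psi> = (\<lambda>x::real^3. (x$1 * \<mu>) *\<^sub>R v + x$2 *\<^sub>R f + x$3 *\<^sub>R e)"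
  have l: "linear \<Psi>"
    by (rule linearI) (simp_all add: \<Psi>_def algebra_simps)
  have i: "inj \<Psi>"
  proof (rule inj_lin[OF l])
    fix x :: "real^3" assume h: "\<Psi> x = 0"
    have "(x$1 * \<mu>) * v$1 + x$2 * f$1 = 0" "(x$1 * \<mu>) * v$2 + x$2 * f$2 = 0"
      "(x$1 * \<mu>) * v$3 + x$2 * f$3 + x$3 * E = 0"
      using h e unfolding vec3_eq by (simp_all add: \<Psi>_def E_def)
    moreover have "v$1 * f$2 - v$2 * f$1 \<noteq> 0" using ovf N0 by simp
    ultimately show "x = 0" using two_by_two[of "x$1 * \<mu>" "v$1" "x$2" "f$1" "v$2" "f$2"] mu0 E0
      by (simp add: vec3_eq)
  qed
  have h: "\<And>x y. \<Psi> (hbr x y) = hbr (\<Psi> x) (\<Psi> y)"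
  proof -
    fix x y :: "real^3"
    have "(hbr (\<Psi> x) (\<Psi> y))$3 = (x$1*y$2 - x$2*y$1) * (\<mu> * (v$1 * f$2 - v$2 * f$1))"
      using e by (simp add: \<Psi>_def algebra_simps)
    thus "\<Psi> (hbr x y) = hbr (\<Psi> x) (\<Psi> y)" using e by (simp add: vec3_eq muE \<Psi>_def E_def)
  qed
  have c: "\<And>x. J (\<Psi> x) = \<Psi> (M2 \<alpha> *v x)"
    by (simp add: \<Psi>_def M2_mult linear_add[OF lJ] linear_scale[OF lJ] Jv f_def[symmetric] Jf algebra_simps)
  show ?thesis using equiv_intro[where M="\<lambda>v. M2 \<alpha> *v v", OF l i h c] ntor by blast
qed

lemma uniq1:
  assumes "equivalent J (\<lambda>v. M1 c *v v)" "equivalent J (\<lambda>v. M1 c' *v v)"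
  shows "c = c'"
proof -
  have "M1 c *v e3 = c *\<^sub>R e3" by (simp add: M1_mult vec3_eq)
  moreover have "e3 \<noteq> 0" by (simp add: vec3_eq)
  ultimately obtain z where z: "z \<noteq> 0" "M1 c' *v z = c *\<^sub>R z"
    using equiv_eigen[OF assms] by blast
  hence q: "- z$2 = c * z$1" "z$1 = c * z$2" "c' * z$3 = c * z$3" by (simp_all add: M1_mult vec3_eq)
  have "z$1 * (1 + c*c) = z$1 + c * (c * z$1)" by (simp add: algebra_simps)
  also have "\<dots> = z$1 - c * z$2" using q(1) by (metis minus_mult_right diff_conv_add_uminus)
  also have "\<dots> = 0" using q(2) by simp
  finally have "z$1 * (1 + c*c) = 0" .
  moreover have "1 + c*c \<noteq> 0" by (smt (verit) zero_le_square)
  ultimately have "z$1 = 0" by simp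
  hence "z$2 = 0" using q(1) by simp
  hence "z$3 \<noteq> 0" using z \<open>z$1 = 0\<close> by (auto simp: vec3_eq)
  thus ?thesis using q(3) by simp
qed

lemma uniq2:
  assumes "equivalent J (\<lambda>v. M2 t *v v)" "equivalent J (\<lambda>v. M2 t' *v v)"
  shows "t = t'"
proof -
  have "M2 t *v (vector [1,0,0]) = t *\<^sub>R (vector [1,0,0] :: real^3)" by (simp add: M2_mult vec3_eq)
  moreover have "(vector [1,0,0] :: real^3) \<noteq> 0" by (simp add: vec3_eq)
  ultimately obtain z where z: "z \<noteq> 0" "M2 t' *v z = t *\<^sub>R z"
    using equiv_eigen[OF assms] by blast
  hence q: "t' * z$1 = t * z$1" "z$3 = t * z$2" "- z$2 = t * z$3" by (simp_all add: M2_mult vec3_eq)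
  have "z$2 * (1 + t*t) = z$2 + t * (t * z$2)" by (simp add: algebra_simps)
  also have "\<dots> = z$2 + t * z$3" using q(2) by simp
  also have "\<dots> = 0" using q(3) by (metis add.right_inverse minus_minus)
  finally have "z$2 * (1 + t*t) = 0" .
  moreover have "1 + t*t \<noteq> 0" by (smt (verit) zero_le_square)
  ultimately have "z$2 = 0" by simp
  hence "z$3 = 0" using q(2) by simp
  hence "z$1 \<noteq> 0" using z \<open>z$2 = 0\<close> by (auto simp: vec3_eq)
  thus ?thesis using q(1) by simp
qed

theorem lemma4:
  shows "(\<forall>J :: real^3 \<Rightarrow> real^3. linear J \<and> zero_torsion J \<and>
            (\<exists>p Jp. CR1 p Jp \<and> extends_CR J p Jp \<and> \<not> abelian_sub p)
          \<longrightarrow> (\<exists>!c::real. equivalent J (\<lambda>v. M1 c *v v)))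
       \<and> (\<forall>J :: real^3 \<Rightarrow> real^3. linear J \<and>
            (\<exists>p Jp. CR1 p Jp \<and> extends_CR J p Jp \<and> abelian_sub p)
          \<longrightarrow> (\<exists>!t::real. equivalent J (\<lambda>v. M2 t *v v)) \<and> \<not> zero_torsion J)"
proof (intro conjI allI impI)
  fix J :: "real^3 \<Rightarrow> real^3"
  assume "linear J \<and> zero_torsion J \<and> (\<exists>p Jp. CR1 p Jp \<and> extends_CR J p Jp \<and> \<not> abelian_sub p)"
  then obtain c where "equivalent J (\<lambda>v. M1 c *v v)" using part1_exists by blast
  thus "\<exists>!c::real. equivalent J (\<lambda>v. M1 c *v v)" using uniq1 by blast
next
  fix J :: "real^3 \<Rightarrow> real^3"
  assume "linear J \<and> (\<exists>p Jp. CR1 p Jp \<and> extends_CR J p Jp \<and> abelian_sub p)"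
  then have P: "(\<exists>t. equivalent J (\<lambda>v. M2 t *v v)) \<and> \<not> zero_torsion J" using part2 by blast
  thus "\<exists>!t::real. equivalent J (\<lambda>v. M2 t *v v)" using uniq2 by blast
  show "\<not> zero_torsion J" using P by blast
qed

end
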